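(* Let $(X,*,\circ)$ be a left skew brace and $U,V\subseteq X$ sub-skew braces. The following are equivalent: (1) $[U,V]=0$, i.e. there exists a skew brace morphism $\varphi\colon U\times V\to X$ with $\varphi(u,1)=u$ and $\varphi(1,v)=v$ for all $u\in U$, $v\in V$; (2) for all $(u,v)\in U\times V$ we have $u\circ v=u*v$, and this restricted operation is commutative, i.e. $u*v=v*u$ and $u\circ v=v\circ u$; (3) for all $(u,v)\in U\times V$, $\lambda_u(v)=v$, every element of $U$ commutes with every element of $V$ in the group $(X,* )$, and every element of $U$ commutes with every element of $V$ in the group $(X,\circ)$. Consequently, an abelian object of $\mathsf{SKB}$ (a skew brace $X$ with $[X,X]=0$) is necessarily of the form $(A,+,+)$ with $(A,+)$ an abelian group.
   Context: A (left) skew brace is a triple $(A,*,\circ)$ with $(A,* )$ and $(A,\circ)$ groups such that $a\circ(b*c)=(a\circ b)*a^{-*}*(a\circ c)$ for all $a,b,c\in A$; $a^{-*}$ denotes the inverse in $(A,* )$. The two groups share the identity $1$. Morphisms are maps that are homomorphisms for both operations; products of skew braces are taken componentwise. For $a,u\in A$ put $\lambda_a(u)=a^{-*}*(a\circ u)$. $\mathsf{SKB}$ denotes the category of left skew braces. *)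

theory Defs
  imports "HOL-Algebra.Group"
begin

text \<open>A skew brace is given by a carrier A, the operation s (written * in the paper),
  the operation c (written \<circ>), and the common identity e.\<close>

definition grp_of :: "'a set \<Rightarrow> ('a \<Rightarrow> 'a \<Rightarrow> 'a) \<Rightarrow> 'a \<Rightarrow> 'a monoid" where
  "grp_of A m e = \<lparr>carrier = A, mult = m, one = e\<rparr>"

definition skew_brace :: "'a set \<Rightarrow> ('a \<Rightarrow> 'a \<Rightarrow> 'a) \<Rightarrow> ('a \<Rightarrow> 'a \<Rightarrow> 'a) \<Rightarrow> 'a \<Rightarrow> bool" where
  "skew_brace A s c e \<longleftrightarrow> group (grp_of A s e) \<and> group (grp_of A c e) \<and>
     (\<forall>a\<in>A. \<forall>b\<in>A. \<forall>x\<in>A.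
        c a (s b x) = s (s (c a b) (inv\<^bsub>grp_of A s e\<^esub> a)) (c a x))"

definition sub_skew_brace :: "'a set \<Rightarrow> 'a set \<Rightarrow> ('a \<Rightarrow> 'a \<Rightarrow> 'a) \<Rightarrow> ('a \<Rightarrow> 'a \<Rightarrow> 'a) \<Rightarrow> 'a \<Rightarrow> bool" where
  "sub_skew_brace U A s c e \<longleftrightarrow>
     subgroup U (grp_of A s e) \<and> subgroup U (grp_of A c e)"

definition sb_lambda :: "'a set \<Rightarrow> ('a \<Rightarrow> 'a \<Rightarrow> 'a) \<Rightarrow> ('a \<Rightarrow> 'a \<Rightarrow> 'a) \<Rightarrow> 'a \<Rightarrow> 'a \<Rightarrow> 'a \<Rightarrow> 'a" where
  "sb_lambda A s c e a u = s (inv\<^bsub>grp_of A s e\<^esub> a) (c a u)"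

definition prod_op :: "('a \<Rightarrow> 'a \<Rightarrow> 'a) \<Rightarrow> ('b \<Rightarrow> 'b \<Rightarrow> 'b) \<Rightarrow> ('a \<times> 'b) \<Rightarrow> ('a \<times> 'b) \<Rightarrow> ('a \<times> 'b)" where
  "prod_op m n p q = (m (fst p) (fst q), n (snd p) (snd q))"

definition sb_morphism :: "'a set \<Rightarrow> ('a \<Rightarrow> 'a \<Rightarrow> 'a) \<Rightarrow> ('a \<Rightarrow> 'a \<Rightarrow> 'a) \<Rightarrow>
    'b set \<Rightarrow> ('b \<Rightarrow> 'b \<Rightarrow> 'b) \<Rightarrow> ('b \<Rightarrow> 'b \<Rightarrow> 'b) \<Rightarrow> ('a \<Rightarrow> 'b) \<Rightarrow> bool" where
  "sb_morphism A s c B s' c' f \<longleftrightarrow> f \<in> A \<rightarrow> B \<and>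
     (\<forall>x\<in>A. \<forall>y\<in>A. f (s x y) = s' (f x) (f y) \<and> f (c x y) = c' (f x) (f y))"

definition sb_commute :: "'a set \<Rightarrow> ('a \<Rightarrow> 'a \<Rightarrow> 'a) \<Rightarrow> ('a \<Rightarrow> 'a \<Rightarrow> 'a) \<Rightarrow> 'a \<Rightarrow> 'a set \<Rightarrow> 'a set \<Rightarrow> bool" where
  "sb_commute A s c e U V \<longleftrightarrow> (\<exists>\<phi>.
     sb_morphism (U \<times> V) (prod_op s s) (prod_op c c) A s c \<phi> \<and>
     (\<forall>u\<in>U. \<phi> (u, e) = u) \<and> (\<forall>v\<in>V. \<phi> (e, v) = v))"

end

theory Submission
  imports Defs
begin

lemma grp_of_simps[simp]: "carrier (grp_of A m e) = A" "mult (grp_of A m e) = m"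
  "one (grp_of A m e) = e"
  by (simp_all add: grp_of_def)

locale sbctx =
  fixes A :: "'a set" and s c :: "'a \<Rightarrow> 'a \<Rightarrow> 'a" and e :: 'a and U V :: "'a set"
  assumes sb: "skew_brace A s c e"
    and sU: "sub_skew_brace U A s c e" and sV: "sub_skew_brace V A s c e"
begin

lemma Gs: "group (grp_of A s e)" and Gc: "group (grp_of A c e)"
  using sb by (auto simp: skew_brace_def)

lemma UsubS: "subgroup U (grp_of A s e)" and UsubC: "subgroup U (grp_of A c e)"
  and VsubS: "subgroup V (grp_of A s e)" and VsubC: "subgroup V (grp_of A c e)"
  using sU sV by (auto simp: sub_skew_brace_def)

lemma UA: "U \<subseteq> A" and VA: "V \<subseteq> A"
  using subgroup.subset[OF UsubS] subgroup.subset[OF VsubS] by simp_all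

lemma eU: "e \<in> U" and eV: "e \<in> V"
  using subgroup.one_closed[OF UsubS] subgroup.one_closed[OF VsubS] by simp_all

lemma Us: "x \<in> U \<Longrightarrow> y \<in> U \<Longrightarrow> s x y \<in> U" and Uc: "x \<in> U \<Longrightarrow> y \<in> U \<Longrightarrow> c x y \<in> U"
  and Vs: "x \<in> V \<Longrightarrow> y \<in> V \<Longrightarrow> s x y \<in> V" and Vc: "x \<in> V \<Longrightarrow> y \<in> V \<Longrightarrow> c x y \<in> V"
  using subgroup.m_closed[OF UsubS, of x y] subgroup.m_closed[OF UsubC, of x y]
    subgroup.m_closed[OF VsubS, of x y] subgroup.m_closed[OF VsubC, of x y] by simp_all

lemma s_assoc: "x \<in> A \<Longrightarrow> y \<in> A \<Longrightarrow> z \<in> A \<Longrightarrow> s (s x y) z = s x (s y z)"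
  using group.axioms(1)[OF Gs] monoid.m_assoc[of "grp_of A s e" x y z] by simp
lemma c_assoc: "x \<in> A \<Longrightarrow> y \<in> A \<Longrightarrow> z \<in> A \<Longrightarrow> c (c x y) z = c x (c y z)"
  using group.axioms(1)[OF Gc] monoid.m_assoc[of "grp_of A c e" x y z] by simp
lemma s_r: "x \<in> A \<Longrightarrow> s x e = x" and s_l: "x \<in> A \<Longrightarrow> s e x = x"
  using group.axioms(1)[OF Gs] monoid.r_one[of "grp_of A s e" x] monoid.l_one[of "grp_of A s e" x]
  by simp_all
lemma c_r: "x \<in> A \<Longrightarrow> c x e = x" and c_l: "x \<in> A \<Longrightarrow> c e x = x"
  using group.axioms(1)[OF Gc] monoid.r_one[of "grp_of A c e" x] monoid.l_one[of "grp_of A c e" x]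
  by simp_all
lemma s_closed: "x \<in> A \<Longrightarrow> y \<in> A \<Longrightarrow> s x y \<in> A"
  using group.axioms(1)[OF Gs] monoid.m_closed[of "grp_of A s e" x y] by simp
lemma c_closed: "x \<in> A \<Longrightarrow> y \<in> A \<Longrightarrow> c x y \<in> A"
  using group.axioms(1)[OF Gc] monoid.m_closed[of "grp_of A c e" x y] by simp

lemma lam_iff: assumes "u \<in> A" "v \<in> A"
  shows "sb_lambda A s c e u v = v \<longleftrightarrow> c u v = s u v"
proof -
  let ?i = "inv\<^bsub>grp_of A s e\<^esub> u"
  have i: "?i \<in> A" and il: "s ?i u = e" and ir: "s u ?i = e"
    using group.inv_closed[OF Gs, of u] group.l_inv[OF Gs, of u] group.r_inv[OF Gs, of u] assms
    by simp_all
  have cl: "c u v \<in> A" using c_closed assms by blast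
  show ?thesis
  proof
    assume "sb_lambda A s c e u v = v"
    hence "s ?i (c u v) = v" by (simp add: sb_lambda_def)
    hence "s u (s ?i (c u v)) = s u v" by simp
    thus "c u v = s u v" using s_assoc[OF assms(1) i cl] ir s_l[OF cl] by simp
  next
    assume "c u v = s u v"
    thus "sb_lambda A s c e u v = v" unfolding sb_lambda_def
      using s_assoc[OF i assms] il s_l[OF assms(2)] by simp
  qed
qed

lemma one_two: assumes "sb_commute A s c e U V"
  shows "\<forall>u\<in>U. \<forall>v\<in>V. c u v = s u v \<and> s u v = s v u \<and> c u v = c v u"
proof (intro ballI)
  fix u v assume u: "u \<in> U" and v: "v \<in> V"
  obtain \<phi> where m: "sb_morphism (U \<times> V) (prod_op s s) (prod_op c c) A s c \<phi>"
    and p1: "\<forall>u\<in>U. \<phi> (u, e) = u" and p2: "\<forall>v\<in>V. \<phi> (e, v) = v"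
    using assms unfolding sb_commute_def by blast
  have uA: "u \<in> A" and vA: "v \<in> A" using u v UA VA by auto
  have a: "(u,e) \<in> U \<times> V" "(e,v) \<in> U \<times> V" using u v eU eV by auto
  have h: "\<And>x y. x \<in> U \<times> V \<Longrightarrow> y \<in> U \<times> V \<Longrightarrow>
     \<phi> (prod_op s s x y) = s (\<phi> x) (\<phi> y) \<and> \<phi> (prod_op c c x y) = c (\<phi> x) (\<phi> y)"
    using m unfolding sb_morphism_def by blast
  have "\<phi> (u,v) = s u v" using h[OF a(1) a(2)] p1 p2 u v uA vA s_r s_l
    by (simp add: prod_op_def)
  moreover have "\<phi> (u,v) = c u v" using h[OF a(1) a(2)] p1 p2 u v uA vA c_r c_l
    by (simp add: prod_op_def)
  moreover have "\<phi> (u,v) = s v u" using h[OF a(2) a(1)] p1 p2 u v uA vA s_r s_l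
    by (simp add: prod_op_def)
  moreover have "\<phi> (u,v) = c v u" using h[OF a(2) a(1)] p1 p2 u v uA vA c_r c_l
    by (simp add: prod_op_def)
  ultimately show "c u v = s u v \<and> s u v = s v u \<and> c u v = c v u" by simp
qed

lemma two_one: assumes H: "\<forall>u\<in>U. \<forall>v\<in>V. c u v = s u v \<and> s u v = s v u \<and> c u v = c v u"
  shows "sb_commute A s c e U V"
  unfolding sb_commute_def
proof (intro exI[of _ "\<lambda>p. s (fst p) (snd p)"] conjI)
  show "\<forall>u\<in>U. s (fst (u, e)) (snd (u, e)) = u" using s_r UA by auto
  show "\<forall>v\<in>V. s (fst (e, v)) (snd (e, v)) = v" using s_l VA by auto
  show "sb_morphism (U \<times> V) (prod_op s s) (prod_op c c) A s c (\<lambda>p. s (fst p) (snd p))"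
    unfolding sb_morphism_def
  proof (intro conjI ballI)
    show "(\<lambda>p. s (fst p) (snd p)) \<in> U \<times> V \<rightarrow> A" using UA VA s_closed by (auto simp: Pi_def)
  next
    fix x y assume x: "x \<in> U \<times> V" and y: "y \<in> U \<times> V"
    obtain u1 v1 where x1: "x = (u1,v1)" "u1 \<in> U" "v1 \<in> V" using x by auto
    obtain u2 v2 where y1: "y = (u2,v2)" "u2 \<in> U" "v2 \<in> V" using y by auto
    have A1: "u1 \<in> A" "u2 \<in> A" "v1 \<in> A" "v2 \<in> A" using x1 y1 UA VA by auto
    have sc: "s v1 u2 = s u2 v1" using H x1 y1 by metis
    have cc: "c v1 u2 = c u2 v1" using H x1 y1 by metis
    have "s (s u1 u2) (s v1 v2) = s u1 (s (s u2 v1) v2)"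
      using A1 s_assoc s_closed by simp
    also have "\<dots> = s u1 (s (s v1 u2) v2)" using sc by simp
    also have "\<dots> = s (s u1 v1) (s u2 v2)"
      using A1 s_assoc s_closed by simp
    finally show "s (fst (prod_op s s x y)) (snd (prod_op s s x y)) =
        s (s (fst x) (snd x)) (s (fst y) (snd y))"
      using x1 y1 by (simp add: prod_op_def)
    have "s (c u1 u2) (c v1 v2) = c (c u1 u2) (c v1 v2)"
      using H Uc Vc x1 y1 by simp
    also have "\<dots> = c u1 (c (c u2 v1) v2)"
      using A1 c_assoc c_closed by simp
    also have "\<dots> = c u1 (c (c v1 u2) v2)" using cc by simp
    also have "\<dots> = c (c u1 v1) (c u2 v2)"
      using A1 c_assoc c_closed by simp
    also have "\<dots> = c (s u1 v1) (s u2 v2)" using H x1 y1 by simp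
    finally show "s (fst (prod_op c c x y)) (snd (prod_op c c x y)) =
        c (s (fst x) (snd x)) (s (fst y) (snd y))"
      using x1 y1 by (simp add: prod_op_def)
  qed
qed

end

theorem proposition3p9:
  fixes A :: "'a set" and s c :: "'a \<Rightarrow> 'a \<Rightarrow> 'a" and e :: 'a
  assumes "skew_brace A s c e"
  shows "(\<forall>U V. sub_skew_brace U A s c e \<longrightarrow> sub_skew_brace V A s c e \<longrightarrow>
            ((sb_commute A s c e U V \<longleftrightarrow>
               (\<forall>u\<in>U. \<forall>v\<in>V. c u v = s u v \<and> s u v = s v u \<and> c u v = c v u))
           \<and> (sb_commute A s c e U V \<longleftrightarrow>
               (\<forall>u\<in>U. \<forall>v\<in>V. sb_lambda A s c e u v = v \<and> s u v = s v u \<and> c u v = c v u))))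
       \<and> (sb_commute A s c e A A \<longrightarrow>
            (\<forall>x\<in>A. \<forall>y\<in>A. s x y = c x y \<and> s x y = s y x))"
proof -
  have main: "(sb_commute A s c e U V \<longleftrightarrow>
               (\<forall>u\<in>U. \<forall>v\<in>V. c u v = s u v \<and> s u v = s v u \<and> c u v = c v u))
           \<and> (sb_commute A s c e U V \<longleftrightarrow>
               (\<forall>u\<in>U. \<forall>v\<in>V. sb_lambda A s c e u v = v \<and> s u v = s v u \<and> c u v = c v u))"
    if hU: "sub_skew_brace U A s c e" and hV: "sub_skew_brace V A s c e" for U V
  proof -
    interpret X: sbctx A s c e U V using assms hU hV by unfold_locales
    have eq: "(\<forall>u\<in>U. \<forall>v\<in>V. c u v = s u v \<and> s u v = s v u \<and> c u v = c v u) \<longleftrightarrow>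
      (\<forall>u\<in>U. \<forall>v\<in>V. sb_lambda A s c e u v = v \<and> s u v = s v u \<and> c u v = c v u)"
      using X.lam_iff X.UA X.VA by blast
    show ?thesis using X.one_two X.two_one eq by blast
  qed
  have AA: "sub_skew_brace A A s c e"
  proof -
    have "group (grp_of A s e)" "group (grp_of A c e)" using assms by (auto simp: skew_brace_def)
    then show ?thesis unfolding sub_skew_brace_def
      using group.subgroup_self[of "grp_of A s e"] group.subgroup_self[of "grp_of A c e"] by simp
  qed
  show ?thesis
  proof (rule conjI; intro allI impI)
    fix U V assume h1: "sub_skew_brace U A s c e" and h2: "sub_skew_brace V A s c e"
    show "(sb_commute A s c e U V \<longleftrightarrow>
               (\<forall>u\<in>U. \<forall>v\<in>V. c u v = s u v \<and> s u v = s v u \<and> c u v = c v u))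
           \<and> (sb_commute A s c e U V \<longleftrightarrow>
               (\<forall>u\<in>U. \<forall>v\<in>V. sb_lambda A s c e u v = v \<and> s u v = s v u \<and> c u v = c v u))"
      by (rule main[OF h1 h2])
  next
    assume "sb_commute A s c e A A"
    then show "\<forall>x\<in>A. \<forall>y\<in>A. s x y = c x y \<and> s x y = s y x"
      using main[OF AA AA] by metis
  qed
qed

end
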